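(* Let $X$ be a locally compact Hausdorff totally disconnected topological space, $G$ a discrete group, $K$ a field, and $\phi=(\phi_g,X_g,X)_{g\in G}$ a partial action of $G$ on $X$ with every $X_g$ clopen. Then $V\mapsto A_K(\mathcal{G}_V)$ is a bijection between the open invariant subsets $V$ of $X$ and the graded ideals of the Steinberg algebra $A_K(\mathcal{G}_X)$.
   Context: A partial action of $G$ (identity $\varepsilon$) on a topological space $X$ is $(\phi_g,X_g,X)_{g\in G}$ with $X_g$ open, homeomorphisms $\phi_g:X_{g^{-1}}\to X_g$, and (i) $X_\varepsilon=X$, $\phi_\varepsilon=\operatorname{id}$; (ii) $\phi_g(X_{g^{-1}}\cap X_h)=X_g\cap X_{gh}$; (iii) $\phi_g\phi_h(x)=\phi_{gh}(x)$ for $x\in X_{h^{-1}}\cap X_{h^{-1}g^{-1}}$. $V\subseteq X$ is invariant if $\phi_{g^{-1}}(X_g\cap V)\subseteq X_{g^{-1}}\cap V$ for all $g$. The groupoid $\mathcal{G}_X=\bigcup_g\{g\}\times X_g\subseteq G\times X$ (product topology) has range $r(g,x)=x$, domain $d(g,x)=\phi_{g^{-1}}(x)$, composition $(g,x)(h,y)=(gh,x)$ if $y=\phi_{g^{-1}}(x)$, inverse $(g^{-1},\phi_{g^{-1}}(x))$, and is $G$-graded by $(g,x)\mapsto g$; for open invariant $V$, $\mathcal{G}_V=\bigcup_g\{g\}\times(V\cap X_g)$ is an open subgroupoid, and $A_K(\mathcal{G}_V)$ is identified with the functions in $A_K(\mathcal{G}_X)$ supported in $\mathcal{G}_V$. The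 Steinberg algebra $A_K(\mathcal{H})$ consists of compactly supported locally constant functions $\mathcal{H}\to K$ with convolution $(f*g)(\gamma)=\sum_{\alpha\beta=\gamma}f(\alpha)g(\beta)$, graded by supports in $\{g\}\times X_g$. *)

theory Defs
  imports "HOL-Analysis.Analysis"
begin

text \<open>The group G is a type of class group_add (group operation written +,
 identity 0, inverse uminus; not assumed commutative), carrying the discrete
 topology. The space X is the whole type 'x with its type-class topology.\<close>

definition totally_disconnected_space :: "'x::topological_space itself \<Rightarrow> bool" where
  "totally_disconnected_space _ \<longleftrightarrow> (\<forall>S::'x set. connected S \<longrightarrow> (\<exists>a. S \<subseteq> {a}))"

definition partial_action :: "('g::group_add \<Rightarrow> 'x::topological_space \<Rightarrow> 'x) \<Rightarrow> ('g \<Rightarrow> 'x set) \<Rightarrow> bool" where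
  "partial_action \<phi> Xd \<longleftrightarrow>
     (\<forall>g. open (Xd g)) \<and>
     (\<forall>g. \<exists>\<psi>. homeomorphism (Xd (- g)) (Xd g) (\<phi> g) \<psi>) \<and>
     Xd 0 = UNIV \<and> (\<forall>x. \<phi> 0 x = x) \<and>
     (\<forall>g h. \<phi> g ` (Xd (- g) \<inter> Xd h) = Xd g \<inter> Xd (g + h)) \<and>
     (\<forall>g h x. x \<in> Xd (- h) \<inter> Xd (- h + - g) \<longrightarrow> \<phi> g (\<phi> h x) = \<phi> (g + h) x)"

definition invariant_set :: "('g::group_add \<Rightarrow> 'x \<Rightarrow> 'x) \<Rightarrow> ('g \<Rightarrow> 'x set) \<Rightarrow> 'x set \<Rightarrow> bool" where
  "invariant_set \<phi> Xd V \<longleftrightarrow> (\<forall>g. \<phi> (- g) ` (Xd g \<inter> V) \<subseteq> Xd (- g) \<inter> V)"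

text \<open>The groupoid G_V (G_X is the case V = UNIV) as a subset of G \<times> X.\<close>
definition groupoid :: "('g \<Rightarrow> 'x set) \<Rightarrow> 'x set \<Rightarrow> ('g \<times> 'x) set" where
  "groupoid Xd V = {(g, x). x \<in> V \<inter> Xd g}"

definition grp_range :: "'g \<times> 'x \<Rightarrow> 'x" where "grp_range \<gamma> = snd \<gamma>"
definition grp_dom :: "('g::group_add \<Rightarrow> 'x \<Rightarrow> 'x) \<Rightarrow> 'g \<times> 'x \<Rightarrow> 'x" where
  "grp_dom \<phi> \<gamma> = \<phi> (- fst \<gamma>) (snd \<gamma>)"
definition grp_mult :: "'g::group_add \<times> 'x \<Rightarrow> 'g \<times> 'x \<Rightarrow> 'g \<times> 'x" where
  "grp_mult \<alpha> \<beta> = (fst \<alpha> + fst \<beta>, snd \<alpha>)"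

definition GX_topology :: "('g \<times> 'x::topological_space) topology" where
  "GX_topology = prod_topology (discrete_topology UNIV) euclidean"

text \<open>Steinberg algebra A_K(G_V): functions on G_X (extended by 0 outside),
 locally constant on G_V, with compact support contained in G_V.\<close>
definition steinberg :: "('g::group_add \<Rightarrow> 'x set) \<Rightarrow> 'x::topological_space set \<Rightarrow> ('g \<times> 'x \<Rightarrow> 'k::field) set" where
  "steinberg Xd V = {f.
     (\<forall>\<gamma>. \<gamma> \<notin> groupoid Xd V \<longrightarrow> f \<gamma> = 0) \<and>
     (\<forall>\<gamma>\<in>groupoid Xd V. \<exists>W. openin GX_topology W \<and> \<gamma> \<in> W \<and> W \<subseteq> groupoid Xd V \<and>
                              (\<forall>\<delta>\<in>W. f \<delta> = f \<gamma>)) \<and>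
     compactin GX_topology {\<gamma>. f \<gamma> \<noteq> 0}}"

text \<open>Convolution: sum over composable pairs \<alpha>\<beta> = \<gamma> in G_X
 (terms with a zero factor omitted, which does not change the sum).\<close>
definition convolution :: "('g::group_add \<Rightarrow> 'x \<Rightarrow> 'x) \<Rightarrow> ('g \<Rightarrow> 'x set) \<Rightarrow> ('g \<times> 'x \<Rightarrow> 'k::field) \<Rightarrow> ('g \<times> 'x \<Rightarrow> 'k) \<Rightarrow> 'g \<times> 'x \<Rightarrow> 'k" where
  "convolution \<phi> Xd f h \<gamma> =
     (\<Sum>(\<alpha>, \<beta>) \<in> {(\<alpha>, \<beta>). \<alpha> \<in> groupoid Xd UNIV \<and> \<beta> \<in> groupoid Xd UNIV \<and>
                       grp_dom \<phi> \<alpha> = grp_range \<beta> \<and> grp_mult \<alpha> \<beta> = \<gamma> \<and> f \<alpha> \<noteq> 0 \<and> h \<beta> \<noteq> 0}.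
        f \<alpha> * h \<beta>)"

definition hom_component :: "'g \<Rightarrow> ('g \<times> 'x \<Rightarrow> 'k::zero) \<Rightarrow> 'g \<times> 'x \<Rightarrow> 'k" where
  "hom_component g f = (\<lambda>\<gamma>. if fst \<gamma> = g then f \<gamma> else 0)"

definition steinberg_ideal :: "('g::group_add \<Rightarrow> 'x \<Rightarrow> 'x) \<Rightarrow> ('g \<Rightarrow> 'x::topological_space set) \<Rightarrow> ('g \<times> 'x \<Rightarrow> 'k::field) set \<Rightarrow> bool" where
  "steinberg_ideal \<phi> Xd I \<longleftrightarrow>
     I \<subseteq> steinberg Xd UNIV \<and> (\<lambda>_. 0) \<in> I \<and>
     (\<forall>f\<in>I. \<forall>h\<in>I. (\<lambda>\<gamma>. f \<gamma> + h \<gamma>) \<in> I) \<and> (\<forall>f\<in>I. (\<lambda>\<gamma>. - f \<gamma>) \<in> I) \<and>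
     (\<forall>f\<in>I. \<forall>a\<in>steinberg Xd UNIV. convolution \<phi> Xd a f \<in> I \<and> convolution \<phi> Xd f a \<in> I)"

text \<open>Graded ideal: I = \<Oplus>_g (I \<inter> A_g), i.e. every homogeneous component of an
 element of I lies in I.\<close>
definition graded_ideal :: "('g::group_add \<Rightarrow> 'x \<Rightarrow> 'x) \<Rightarrow> ('g \<Rightarrow> 'x::topological_space set) \<Rightarrow> ('g \<times> 'x \<Rightarrow> 'k::field) set \<Rightarrow> bool" where
  "graded_ideal \<phi> Xd I \<longleftrightarrow> steinberg_ideal \<phi> Xd I \<and> (\<forall>f\<in>I. \<forall>g. hom_component g f \<in> I)"

end

theory Submission
  imports Defs
begin


lemma GX_open_iff:
  "openin (GX_topology :: ('g \<times> 'x::topological_space) topology) W \<longleftrightarrow> (\<forall>g. open {x. (g,x) \<in> W})"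
proof
  assume H: "openin GX_topology W"
  show "\<forall>g. open {x. (g,x) \<in> W}"
  proof (intro allI)
    fix g
    show "open {x. (g,x) \<in> W}"
    proof (rule Topological_Spaces.openI)
      fix x assume "x \<in> {x. (g,x) \<in> W}"
      then have "(g,x) \<in> W" by simp
      then obtain U V where UV: "openin (discrete_topology UNIV) U" "openin euclidean V" "g \<in> U" "x \<in> V" "U \<times> V \<subseteq> W"
        using H unfolding GX_topology_def openin_prod_topology_alt by meson
      have "V \<subseteq> {x. (g, x) \<in> W}"
      proof
        fix y assume "y \<in> V" then have "(g,y) \<in> U \<times> V" using UV by simp
        then show "y \<in> {x. (g, x) \<in> W}" using UV by auto
      qed
      then show "\<exists>T. open T \<and> x \<in> T \<and> T \<subseteq> {x. (g, x) \<in> W}"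
        using UV by auto
    qed
  qed
next
  assume H: "\<forall>g. open {x. (g,x) \<in> W}"
  show "openin GX_topology W"
    unfolding GX_topology_def openin_prod_topology_alt
  proof (intro allI impI)
    fix g x assume "(g,x) \<in> W"
    then show "\<exists>U V. openin (discrete_topology UNIV) U \<and> openin euclidean V \<and> g \<in> U \<and> x \<in> V \<and> U \<times> V \<subseteq> W"
      using H by (intro exI[of _ "{g}"] exI[of _ "{x. (g,x) \<in> W}"]) auto
  qed
qed

lemma GX_compact_iff:
  "compactin (GX_topology :: ('g \<times> 'x::topological_space) topology) S \<longleftrightarrow>
     finite (fst ` S) \<and> (\<forall>g. compact {x. (g,x) \<in> S})"
proof
  assume H: "compactin GX_topology S"
  have "compactin (discrete_topology UNIV) (fst ` S)"
    using H unfolding GX_topology_def by (rule image_compactin) (rule continuous_map_fst)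
  then have "finite (fst ` S)" by (simp add: compactin_discrete_topology)
  moreover have "compact {x. (g,x) \<in> S}" for g
  proof -
    have "closedin GX_topology ({g} \<times> UNIV)"
      unfolding GX_topology_def closedin_prod_Times_iff by simp
    then have "compactin GX_topology (({g} \<times> UNIV) \<inter> S)"
      using H by (rule closed_Int_compactin)
    then have "compactin euclidean (snd ` (({g} \<times> UNIV) \<inter> S))"
      unfolding GX_topology_def by (rule image_compactin) (rule continuous_map_snd)
    moreover have "snd ` (({g} \<times> UNIV) \<inter> S) = {x. (g,x) \<in> S}" by force
    ultimately show ?thesis by simp
  qed
  ultimately show "finite (fst ` S) \<and> (\<forall>g. compact {x. (g,x) \<in> S})" by blast
next
  assume H: "finite (fst ` S) \<and> (\<forall>g. compact {x. (g,x) \<in> S})"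
  have "S = \<Union> ((\<lambda>g. {g} \<times> {x. (g,x) \<in> S}) ` fst ` S)" by force
  moreover have "compactin GX_topology (\<Union> ((\<lambda>g. {g} \<times> {x. (g,x) \<in> S}) ` fst ` S))"
    using H by (intro compactin_Union) (auto simp: GX_topology_def compactin_Times)
  ultimately show "compactin GX_topology S" by simp
qed



definition lc :: "('x::topological_space \<Rightarrow> 'k) \<Rightarrow> bool" where
  "lc u \<longleftrightarrow> (\<forall>x. \<exists>W. open W \<and> x \<in> W \<and> (\<forall>y\<in>W. u y = u x))"

lemma lcD: assumes "lc u" obtains W where "open W" "x \<in> W" "\<And>y. y \<in> W \<Longrightarrow> u y = u x"
  using assms unfolding lc_def by metis

lemma lc_const: "lc (\<lambda>x. c)"
  unfolding lc_def by (intro allI exI[of _ UNIV]) auto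

lemma lc_bin: assumes "lc u" "lc v" shows "lc (\<lambda>x. F (u x) (v x))"
  unfolding lc_def
proof
  fix x
  obtain W1 where W1: "open W1" "x \<in> W1" "\<forall>y\<in>W1. u y = u x" using assms(1) unfolding lc_def by blast
  obtain W2 where W2: "open W2" "x \<in> W2" "\<forall>y\<in>W2. v y = v x" using assms(2) unfolding lc_def by blast
  have "\<forall>y\<in>W1 \<inter> W2. F (u y) (v y) = F (u x) (v x)" using W1(3) W2(3) by (metis IntD1 IntD2)
  then show "\<exists>W. open W \<and> x \<in> W \<and> (\<forall>y\<in>W. F (u y) (v y) = F (u x) (v x))"
    using W1 W2 by (meson IntI open_Int)
qed

lemma lc_comp: assumes "lc u" shows "lc (\<lambda>x. F (u x))"
  using lc_bin[OF assms assms, of "\<lambda>a b. F a"] by simp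

lemma lc_sum: assumes "finite A" "\<And>a. a \<in> A \<Longrightarrow> lc (u a)"
  shows "lc (\<lambda>x. \<Sum>a\<in>A. u a x :: 'k::comm_monoid_add)"
  using assms
proof (induction A rule: finite_induct)
  case empty then show ?case by (simp add: lc_const)
next
  case (insert b B)
  have "lc (u b)" using insert.prems by simp
  moreover have "lc (\<lambda>x. \<Sum>a\<in>B. u a x)" using insert.IH insert.prems by simp
  ultimately have "lc (\<lambda>x. u b x + (\<Sum>a\<in>B. u a x))" by (rule lc_bin)
  then show ?case using insert.hyps by simp
qed

lemma lc_open_eq: assumes "lc u" shows "open {x. u x = c}"
proof (rule Topological_Spaces.openI)
  fix x assume x: "x \<in> {x. u x = c}"
  obtain W where W: "open W" "x \<in> W" "\<forall>y\<in>W. u y = u x" using assms unfolding lc_def by blast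
  have "W \<subseteq> {x. u x = c}"
  proof
    fix y assume "y \<in> W" then have "u y = u x" using W(3) by blast
    then show "y \<in> {x. u x = c}" using x by simp
  qed
  then show "\<exists>T. open T \<and> x \<in> T \<and> T \<subseteq> {x. u x = c}" using W by blast
qed

lemma lc_open_neq: assumes "lc u" shows "open {x. u x \<noteq> c}"
proof (rule Topological_Spaces.openI)
  fix x assume x: "x \<in> {x. u x \<noteq> c}"
  obtain W where W: "open W" "x \<in> W" "\<forall>y\<in>W. u y = u x" using assms unfolding lc_def by blast
  have "W \<subseteq> {x. u x \<noteq> c}"
  proof
    fix y assume "y \<in> W" then have "u y = u x" using W(3) by blast
    then show "y \<in> {x. u x \<noteq> c}" using x by simp
  qed
  then show "\<exists>T. open T \<and> x \<in> T \<and> T \<subseteq> {x. u x \<noteq> c}" using W by blast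
qed

lemma lc_closed_neq: assumes "lc u" shows "closed {x. u x \<noteq> c}"
proof -
  have "closed (- {x. u x = c})" using lc_open_eq[OF assms] by (rule closed_Compl)
  also have "- {x. u x = c} = {x. u x \<noteq> c}" by auto
  finally show ?thesis .
qed

lemma lc_compact_sub:
  assumes "lc u" "{x. u x \<noteq> c} \<subseteq> K" "compact K"
  shows "compact {x. u x \<noteq> c}"
proof -
  have "compact (K \<inter> {x. u x \<noteq> c})" using assms lc_closed_neq[OF assms(1)] by (intro compact_Int_closed)
  moreover have "K \<inter> {x. u x \<noteq> c} = {x. u x \<noteq> c}" using assms(2) by blast
  ultimately show ?thesis by simp
qed

lemma lc_term:
  fixes u v :: "'x::topological_space \<Rightarrow> 'k::ring"
  assumes "lc u" "lc v" "open A" "continuous_on A p" "\<And>x. x \<notin> A \<Longrightarrow> u x = 0"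
  shows "lc (\<lambda>x. u x * v (p x))"
  unfolding lc_def
proof
  fix x
  obtain W1 where W1: "open W1" "x \<in> W1" "\<forall>y\<in>W1. u y = u x" using assms(1) unfolding lc_def by blast
  show "\<exists>W. open W \<and> x \<in> W \<and> (\<forall>y\<in>W. u y * v (p y) = u x * v (p x))"
  proof (cases "x \<in> A")
    case True
    obtain W2 where W2: "open W2" "p x \<in> W2" "\<forall>y\<in>W2. v y = v (p x)" using assms(2) unfolding lc_def by blast
    have o: "open (A \<inter> p -` W2)" using assms(3,4) W2(1) by (simp add: continuous_on_open_vimage Int_commute)
    have "\<forall>y\<in>W1 \<inter> (A \<inter> p -` W2). u y * v (p y) = u x * v (p x)"
    proof
      fix y assume y: "y \<in> W1 \<inter> (A \<inter> p -` W2)"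
      then have "u y = u x" using W1(3) by blast
      moreover have "v (p y) = v (p x)" using y W2(3) by blast
      ultimately show "u y * v (p y) = u x * v (p x)" by simp
    qed
    moreover have "x \<in> W1 \<inter> (A \<inter> p -` W2)" using W1(2) W2(2) True by simp
    moreover have "open (W1 \<inter> (A \<inter> p -` W2))" using o W1(1) by (rule open_Int[rotated])
    ultimately show ?thesis by blast
  next
    case False
    then have "u x = 0" by (rule assms(5))
    then have "\<forall>y\<in>W1. u y * v (p y) = u x * v (p x)" using W1(3) by simp
    then show ?thesis using W1 by blast
  qed
qed

lemma t2_Hausdorff: "Hausdorff_space (euclidean :: 'x::t2_space topology)"
  unfolding Hausdorff_space_def disjnt_def by (metis hausdorff open_openin)

lemma zero_dim:
  fixes x :: "'x::t2_space"
  assumes lcs: "locally_compact_space (euclidean :: 'x topology)"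
    and td: "totally_disconnected_space TYPE('x)"
    and Q: "open Q" "x \<in> Q"
  obtains C where "compact C" "open C" "x \<in> C" "C \<subseteq> Q"
proof -
  obtain U K where UK: "open U" "compact K" "x \<in> U" "U \<subseteq> K"
    using lcs unfolding locally_compact_space_def by (metis UNIV_I compactin_euclidean_iff open_openin topspace_euclidean)
  have conn: "connected (connected_component_of_set euclidean x)"
    using connectedin_connected_component_of[of euclidean x] by simp
  have "connected_component_of_set euclidean x = {x}"
  proof -
    obtain a where "connected_component_of_set euclidean x \<subseteq> {a}"
      using td conn unfolding totally_disconnected_space_def by blast
    moreover have "x \<in> connected_component_of_set euclidean x"
      by (simp add: connected_component_of_refl)
    ultimately show ?thesis by blast
  qed
  then have comp: "{x} \<in> connected_components_of euclidean"
    unfolding connected_components_of_def by (intro image_eqI[of _ _ x]) simp_all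
  have o1: "openin euclidean (U \<inter> Q)" using UK(1) Q(1) by (simp add: open_Int)
  have o2: "{x} \<subseteq> U \<inter> Q" using UK(3) Q(2) by simp
  obtain U' V' where UV: "openin euclidean U'" "openin euclidean V'" "disjnt U' V'"
    "U' \<union> V' = topspace euclidean" "{x} \<subseteq> U'" "U' \<subseteq> U \<inter> Q"
    by (rule wilder_locally_compact_component_thm[OF lcs t2_Hausdorff comp _ o1 o2]) simp
  have "U' = - V'" using UV(3,4) by (auto simp: disjnt_def)
  moreover have "closed (- V')" using UV(2) by (simp add: closed_Compl)
  ultimately have "closed U'" by simp
  then have "compact (K \<inter> U')" using UK by (intro compact_Int_closed)
  moreover have "K \<inter> U' = U'" using UV(6) UK(4) by blast
  ultimately have "compact U'" by simp
  moreover have "open U'" "x \<in> U'" "U' \<subseteq> Q" using UV(1,5,6) by auto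
  ultimately show ?thesis using that by blast
qed



section \<open>Partial action facts\<close>

context
  fixes \<phi> :: "'g::group_add \<Rightarrow> 'x::topological_space \<Rightarrow> 'x" and Xd :: "'g \<Rightarrow> 'x set"
  assumes PA: "partial_action \<phi> Xd"
begin

lemma PA_open: "open (Xd g)"
  using PA unfolding partial_action_def by blast

lemma PA_X0: "Xd 0 = UNIV"
  using PA unfolding partial_action_def by blast

lemma PA_phi0: "\<phi> 0 x = x"
  using PA unfolding partial_action_def by blast

lemma PA_hom: "\<exists>\<psi>. homeomorphism (Xd (- g)) (Xd g) (\<phi> g) \<psi>"
  using PA unfolding partial_action_def by blast

lemma PA1: assumes "x \<in> Xd g" shows "\<phi> (- g) x \<in> Xd (- g)"
proof -
  obtain \<psi> where "homeomorphism (Xd (- (- g))) (Xd (- g)) (\<phi> (- g)) \<psi>" using PA_hom by blast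
  then have "\<phi> (- g) ` Xd g = Xd (- g)" unfolding homeomorphism_def by simp
  then show ?thesis using assms by blast
qed

lemma PA4: "continuous_on (Xd g) (\<phi> (- g))"
proof -
  obtain \<psi> where "homeomorphism (Xd (- (- g))) (Xd (- g)) (\<phi> (- g)) \<psi>" using PA_hom by blast
  then show ?thesis unfolding homeomorphism_def by simp
qed

lemma PA2: assumes "x \<in> Xd g" shows "\<phi> g (\<phi> (- g) x) = x"
proof -
  have "\<forall>g h x. x \<in> Xd (- h) \<inter> Xd (- h + - g) \<longrightarrow> \<phi> g (\<phi> h x) = \<phi> (g + h) x"
    using PA unfolding partial_action_def by blast
  then have "x \<in> Xd (- (- g)) \<inter> Xd (- (- g) + - g) \<longrightarrow> \<phi> g (\<phi> (- g) x) = \<phi> (g + - g) x" by blast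
  moreover have "x \<in> Xd (- (- g)) \<inter> Xd (- (- g) + - g)" using assms PA_X0 by simp
  ultimately show ?thesis using PA_phi0 by simp
qed

lemma PA3: assumes "x \<in> Xd g" "\<phi> (- g) x \<in> Xd b" shows "x \<in> Xd (g + b)"
proof -
  have "\<phi> g ` (Xd (- g) \<inter> Xd b) = Xd g \<inter> Xd (g + b)"
    using PA unfolding partial_action_def by blast
  moreover have "\<phi> (- g) x \<in> Xd (- g) \<inter> Xd b" using PA1[OF assms(1)] assms(2) by simp
  ultimately have "\<phi> g (\<phi> (- g) x) \<in> Xd g \<inter> Xd (g + b)" by blast
  then show ?thesis using PA2[OF assms(1)] by simp
qed

end

section \<open>Good functions\<close>

definition good :: "('g \<Rightarrow> 'x::topological_space set) \<Rightarrow> 'x set \<Rightarrow> ('g \<times> 'x \<Rightarrow> 'k::zero) \<Rightarrow> bool" where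
  "good Xd V f \<longleftrightarrow> (\<forall>g x. x \<notin> V \<inter> Xd g \<longrightarrow> f (g,x) = 0) \<and> (\<forall>g. lc (\<lambda>x. f (g,x))) \<and>
     finite {g. \<exists>x. f (g,x) \<noteq> 0} \<and> (\<forall>g. compact {x. f (g,x) \<noteq> 0})"

lemma steinberg_good:
  fixes Xd :: "'g::group_add \<Rightarrow> 'x::t2_space set"
  assumes XO: "\<And>g. open (Xd g)" and VO: "open V"
  shows "(f \<in> steinberg Xd V) = good Xd V (f :: 'g \<times> 'x \<Rightarrow> 'k::field)"
proof
  assume f: "f \<in> steinberg Xd V"
  have van: "\<forall>g x. x \<notin> V \<inter> Xd g \<longrightarrow> f (g,x) = 0"
    using f unfolding steinberg_def groupoid_def by auto
  have "compactin GX_topology {\<gamma>. f \<gamma> \<noteq> 0}" using f unfolding steinberg_def by blast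
  then have cpt: "finite (fst ` {\<gamma>. f \<gamma> \<noteq> 0})" "\<And>g. compact {x. (g,x) \<in> {\<gamma>. f \<gamma> \<noteq> 0}}"
    unfolding GX_compact_iff by auto
  have fin: "finite {g. \<exists>x. f (g,x) \<noteq> 0}"
  proof -
    have "{g. \<exists>x. f (g,x) \<noteq> 0} = fst ` {\<gamma>. f \<gamma> \<noteq> 0}" by force
    then show ?thesis using cpt(1) by simp
  qed
  have cs: "compact {x. f (g,x) \<noteq> 0}" for g using cpt(2)[of g] by simp
  have lcf: "lc (\<lambda>x. f (g,x))" for g
    unfolding lc_def
  proof
    fix x
    show "\<exists>W. open W \<and> x \<in> W \<and> (\<forall>y\<in>W. f (g,y) = f (g,x))"
    proof (cases "f (g,x) = 0")
      case True
      have "closed {x. f (g,x) \<noteq> 0}" using cs compact_imp_closed by blast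
      then have "open (- {x. f (g,x) \<noteq> 0})" by (simp only: open_Compl)
      moreover have "\<forall>y\<in>- {x. f (g,x) \<noteq> 0}. f (g,y) = f (g,x)" using True by simp
      moreover have "x \<in> - {x. f (g,x) \<noteq> 0}" using True by simp
      ultimately show ?thesis by blast
    next
      case False
      then have "(g,x) \<in> groupoid Xd V" using van by (auto simp: groupoid_def)
      then obtain W where W: "openin GX_topology W" "(g,x) \<in> W" "W \<subseteq> groupoid Xd V" "\<forall>\<delta>\<in>W. f \<delta> = f (g,x)"
        using f unfolding steinberg_def by blast
      have "open {y. (g,y) \<in> W}" using W(1) unfolding GX_open_iff by blast
      moreover have "\<forall>y\<in>{y. (g,y) \<in> W}. f (g,y) = f (g,x)" using W(4) by blast
      moreover have "x \<in> {y. (g,y) \<in> W}" using W(2) by simp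
      ultimately show ?thesis by blast
    qed
  qed
  show "good Xd V f" unfolding good_def using van lcf fin cs by blast
next
  assume g: "good Xd V f"
  have van: "\<forall>\<gamma>. \<gamma> \<notin> groupoid Xd V \<longrightarrow> f \<gamma> = 0"
    using g unfolding good_def groupoid_def by auto
  have loc: "\<exists>W. openin GX_topology W \<and> \<gamma> \<in> W \<and> W \<subseteq> groupoid Xd V \<and> (\<forall>\<delta>\<in>W. f \<delta> = f \<gamma>)"
    if "\<gamma> \<in> groupoid Xd V" for \<gamma>
  proof -
    obtain g x where gx: "\<gamma> = (g,x)" by (cases \<gamma>)
    then have x: "x \<in> V" "x \<in> Xd g" using that unfolding groupoid_def by auto
    have "lc (\<lambda>x. f (g,x))" using g unfolding good_def by blast
    then obtain W0 where W0: "open W0" "x \<in> W0" "\<forall>y\<in>W0. f (g,y) = f (g,x)" unfolding lc_def by blast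
    define W where "W = {g} \<times> (W0 \<inter> V \<inter> Xd g)"
    have "open {y. (h,y) \<in> W}" for h
    proof (cases "h = g")
      case True
      then have "{y. (h,y) \<in> W} = W0 \<inter> V \<inter> Xd g" unfolding W_def by auto
      then show ?thesis using W0(1) VO XO by (simp add: open_Int)
    next
      case False
      then have "{y. (h,y) \<in> W} = {}" unfolding W_def by auto
      then show ?thesis by simp
    qed
    then have "openin GX_topology W" unfolding GX_open_iff by blast
    moreover have "\<gamma> \<in> W" using gx x W0(2) unfolding W_def by simp
    moreover have "W \<subseteq> groupoid Xd V" unfolding W_def groupoid_def by auto
    moreover have "\<forall>\<delta>\<in>W. f \<delta> = f \<gamma>" unfolding W_def gx using W0(3) by auto
    ultimately show ?thesis by blast
  qed
  have "finite (fst ` {\<gamma>. f \<gamma> \<noteq> 0})"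
  proof -
    have "fst ` {\<gamma>. f \<gamma> \<noteq> 0} = {g. \<exists>x. f (g,x) \<noteq> 0}" by force
    then show ?thesis using g unfolding good_def by simp
  qed
  moreover have "compact {x. (h,x) \<in> {\<gamma>. f \<gamma> \<noteq> 0}}" for h using g unfolding good_def by simp
  ultimately have "compactin GX_topology {\<gamma>. f \<gamma> \<noteq> 0}" unfolding GX_compact_iff by blast
  then show "f \<in> steinberg Xd V" unfolding steinberg_def using van loc by blast
qed



lemma conv_formula:
  fixes f k :: "'g::group_add \<times> 'x \<Rightarrow> 'k::field"
  assumes fin: "finite F" and fF: "\<And>a x. f (a,x) \<noteq> 0 \<Longrightarrow> a \<in> F"
    and fX: "\<And>a x. f (a,x) \<noteq> 0 \<Longrightarrow> x \<in> Xd a" and kX: "\<And>b y. k (b,y) \<noteq> 0 \<Longrightarrow> y \<in> Xd b"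
  shows "convolution \<phi> Xd f k (h,x) = (\<Sum>a\<in>F. f (a,x) * k (- a + h, \<phi> (- a) x))"
proof -
  define P where "P = {(\<alpha>, \<beta>). \<alpha> \<in> groupoid Xd UNIV \<and> \<beta> \<in> groupoid Xd UNIV \<and>
                       grp_dom \<phi> \<alpha> = grp_range \<beta> \<and> grp_mult \<alpha> \<beta> = (h,x) \<and> f \<alpha> \<noteq> 0 \<and> k \<beta> \<noteq> 0}"
  define F' where "F' = {a\<in>F. f (a,x) * k (- a + h, \<phi> (- a) x) \<noteq> 0}"
  define m where "m = (\<lambda>a. ((a,x), (- a + h, \<phi> (- a) x)))"
  have conv: "convolution \<phi> Xd f k (h,x) = (\<Sum>(\<alpha>,\<beta>)\<in>P. f \<alpha> * k \<beta>)"
    unfolding convolution_def P_def by simp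
  have P: "P = m ` F'"
  proof
    show "P \<subseteq> m ` F'"
    proof
      fix p assume "p \<in> P"
      then obtain a x' b y where p: "p = ((a,x'),(b,y))" and c: "\<phi> (- a) x' = y" "a + b = h" "x' = x"
          "f (a,x') \<noteq> 0" "k (b,y) \<noteq> 0"
        unfolding P_def groupoid_def grp_dom_def grp_range_def grp_mult_def by auto
      have b: "b = - a + h" unfolding c(2)[symmetric] by simp
      have "a \<in> F'" using c fF b unfolding F'_def by auto
      then show "p \<in> m ` F'" using p c b unfolding m_def by auto
    qed
    show "m ` F' \<subseteq> P"
    proof
      fix p assume "p \<in> m ` F'"
      then obtain a where a: "a \<in> F'" "p = m a" by blast
      then have nz: "f (a,x) \<noteq> 0" "k (- a + h, \<phi> (- a) x) \<noteq> 0" unfolding F'_def by auto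
      have "x \<in> Xd a" using fX[OF nz(1)] .
      moreover have "\<phi> (- a) x \<in> Xd (- a + h)" using kX[OF nz(2)] .
      moreover have "a + (- a + h) = h" by (simp add: add.assoc[symmetric])
      ultimately show "p \<in> P" using a(2) nz
        unfolding P_def m_def groupoid_def grp_dom_def grp_range_def grp_mult_def by simp
    qed
  qed
  have inj: "inj_on m F'" unfolding m_def inj_on_def by auto
  have "(\<Sum>(\<alpha>,\<beta>)\<in>P. f \<alpha> * k \<beta>) = (\<Sum>a\<in>F'. f (a,x) * k (- a + h, \<phi> (- a) x))"
    unfolding P by (subst sum.reindex[OF inj]) (simp add: m_def)
  also have "\<dots> = (\<Sum>a\<in>F. f (a,x) * k (- a + h, \<phi> (- a) x))"
    by (rule sum.mono_neutral_left) (use fin in \<open>auto simp: F'_def\<close>)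
  finally show ?thesis using conv by simp
qed

lemma good_zero: "good Xd V (\<lambda>_. 0)"
  unfolding good_def by (simp add: lc_const)

lemma good_add:
  assumes "good Xd V f" "good Xd V k"
  shows "good Xd V (\<lambda>\<gamma>. f \<gamma> + k \<gamma> :: 'k::comm_monoid_add)"
proof -
  have van: "\<forall>g x. x \<notin> V \<inter> Xd g \<longrightarrow> f (g,x) + k (g,x) = 0" using assms unfolding good_def by simp
  have lcs: "lc (\<lambda>x. f (g,x) + k (g,x))" for g
  proof -
    have "lc (\<lambda>x. f (g,x))" "lc (\<lambda>x. k (g,x))" using assms unfolding good_def by blast+
    then show ?thesis using lc_bin[of "\<lambda>x. f (g,x)" "\<lambda>x. k (g,x)" "(+)"] by simp
  qed
  have "{g. \<exists>x. f (g,x) + k (g,x) \<noteq> 0} \<subseteq> {g. \<exists>x. f (g,x) \<noteq> 0} \<union> {g. \<exists>x. k (g,x) \<noteq> 0}" by force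
  then have fin: "finite {g. \<exists>x. f (g,x) + k (g,x) \<noteq> 0}"
    using assms unfolding good_def by (meson finite_Un finite_subset)
  have "compact {x. f (g,x) + k (g,x) \<noteq> 0}" for g
  proof (rule lc_compact_sub[OF lcs])
    show "{x. f (g,x) + k (g,x) \<noteq> 0} \<subseteq> {x. f (g,x) \<noteq> 0} \<union> {x. k (g,x) \<noteq> 0}" by force
    show "compact ({x. f (g,x) \<noteq> 0} \<union> {x. k (g,x) \<noteq> 0})"
      using assms unfolding good_def by (blast intro: compact_Un)
  qed
  then show ?thesis unfolding good_def using van lcs fin by simp
qed

lemma good_neg:
  assumes "good Xd V f"
  shows "good Xd V (\<lambda>\<gamma>. - f \<gamma> :: 'k::ab_group_add)"
proof -
  have "lc (\<lambda>x. - f (g,x))" for g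
  proof -
    have "lc (\<lambda>x. f (g,x))" using assms unfolding good_def by blast
    then show ?thesis using lc_comp[of "\<lambda>x. f (g,x)" uminus] by simp
  qed
  then show ?thesis using assms unfolding good_def by simp
qed

lemma good_hom:
  assumes "good Xd V f"
  shows "good Xd V (hom_component g f)"
proof -
  have van: "\<forall>h x. x \<notin> V \<inter> Xd h \<longrightarrow> hom_component g f (h,x) = 0"
    using assms unfolding good_def hom_component_def by simp
  have lcs: "lc (\<lambda>x. hom_component g f (h,x))" for h
    using assms unfolding good_def hom_component_def by (cases "h = g") (simp_all add: lc_const)
  have "{h. \<exists>x. hom_component g f (h,x) \<noteq> 0} \<subseteq> {g. \<exists>x. f (g,x) \<noteq> 0}"
    unfolding hom_component_def by auto
  then have fin: "finite {h. \<exists>x. hom_component g f (h,x) \<noteq> 0}"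
    using assms unfolding good_def by (meson finite_subset)
  have "compact {x. hom_component g f (h,x) \<noteq> 0}" for h
    using assms unfolding good_def hom_component_def by (cases "h = g") simp_all
  then show ?thesis unfolding good_def using van lcs fin by simp
qed

lemma good_mono: "good Xd V f \<Longrightarrow> good Xd UNIV f"
  unfolding good_def by blast

lemma good_restrict: "good Xd UNIV f \<Longrightarrow> (\<And>g x. x \<notin> V \<Longrightarrow> f (g,x) = 0) \<Longrightarrow> good Xd V f"
  unfolding good_def by blast

context
  fixes \<phi> :: "'g::group_add \<Rightarrow> 'x::topological_space \<Rightarrow> 'x" and Xd :: "'g \<Rightarrow> 'x set"
  assumes PA: "partial_action \<phi> Xd"
begin

lemma conv_formula_good:
  fixes f k :: "'g \<times> 'x \<Rightarrow> 'k::field"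
  assumes "good Xd UNIV f" "good Xd UNIV k"
  shows "convolution \<phi> Xd f k (h,x) = (\<Sum>a\<in>{g. \<exists>x. f (g,x) \<noteq> 0}. f (a,x) * k (- a + h, \<phi> (- a) x))"
  by (rule conv_formula) (use assms in \<open>auto simp: good_def\<close>)

lemma good_conv:
  fixes f k :: "'g \<times> 'x \<Rightarrow> 'k::field"
  assumes f: "good Xd UNIV f" and k: "good Xd UNIV k"
  shows "good Xd UNIV (convolution \<phi> Xd f k)"
proof -
  define F where "F = {g. \<exists>x. f (g,x) \<noteq> 0}"
  define Fk where "Fk = {g. \<exists>x. k (g,x) \<noteq> 0}"
  have finF: "finite F" "finite Fk" using f k unfolding good_def F_def Fk_def by auto
  have cf: "convolution \<phi> Xd f k (h,x) = (\<Sum>a\<in>F. f (a,x) * k (- a + h, \<phi> (- a) x))" for h x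
    unfolding F_def by (rule conv_formula_good[OF f k])
  have fX: "f (a,x) \<noteq> 0 \<Longrightarrow> x \<in> Xd a" for a x using f unfolding good_def by auto
  have kX: "k (b,y) \<noteq> 0 \<Longrightarrow> y \<in> Xd b" for b y using k unfolding good_def by auto
  have nz: "\<exists>a\<in>F. f (a,x) \<noteq> 0 \<and> k (- a + h, \<phi> (- a) x) \<noteq> 0"
    if "convolution \<phi> Xd f k (h,x) \<noteq> 0" for h x
  proof -
    have "(\<Sum>a\<in>F. f (a,x) * k (- a + h, \<phi> (- a) x)) \<noteq> 0" using that cf by simp
    then obtain a where "a \<in> F" "f (a,x) * k (- a + h, \<phi> (- a) x) \<noteq> 0"
      by (rule sum.not_neutral_contains_not_neutral)
    then show ?thesis by auto
  qed
  have van: "\<forall>h x. x \<notin> UNIV \<inter> Xd h \<longrightarrow> convolution \<phi> Xd f k (h,x) = 0"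
  proof (intro allI impI, rule ccontr)
    fix h x assume x: "x \<notin> UNIV \<inter> Xd h" and "convolution \<phi> Xd f k (h,x) \<noteq> 0"
    then obtain a where a: "f (a,x) \<noteq> 0" "k (- a + h, \<phi> (- a) x) \<noteq> 0" using nz by blast
    have "x \<in> Xd (a + (- a + h))" using PA3[OF PA fX[OF a(1)] kX[OF a(2)]] .
    then have "x \<in> Xd h" by (simp add: add.assoc[symmetric])
    then show False using x by simp
  qed
  have lcs: "lc (\<lambda>x. convolution \<phi> Xd f k (h,x))" for h
  proof -
    have "lc (\<lambda>x. \<Sum>a\<in>F. f (a,x) * k (- a + h, \<phi> (- a) x))"
    proof (rule lc_sum[OF finF(1)])
      fix a assume "a \<in> F"
      show "lc (\<lambda>x. f (a,x) * k (- a + h, \<phi> (- a) x))"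
      proof (rule lc_term[where A = "Xd a"])
        show "lc (\<lambda>x. f (a,x))" using f unfolding good_def by blast
        show "lc (\<lambda>y. k (- a + h, y))" using k unfolding good_def by blast
        show "open (Xd a)" by (rule PA_open[OF PA])
        show "continuous_on (Xd a) (\<phi> (- a))" by (rule PA4[OF PA])
        show "\<And>x. x \<notin> Xd a \<Longrightarrow> f (a,x) = 0" using fX by blast
      qed
    qed
    then show ?thesis using cf by presburger
  qed
  have "{h. \<exists>x. convolution \<phi> Xd f k (h,x) \<noteq> 0} \<subseteq> (\<lambda>(a,b). a + b) ` (F \<times> Fk)"
  proof
    fix h assume "h \<in> {h. \<exists>x. convolution \<phi> Xd f k (h,x) \<noteq> 0}"
    then obtain x where "convolution \<phi> Xd f k (h,x) \<noteq> 0" by blast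
    then obtain a where a: "a \<in> F" "k (- a + h, \<phi> (- a) x) \<noteq> 0" using nz by blast
    then have "- a + h \<in> Fk" unfolding Fk_def by blast
    moreover have "h = a + (- a + h)" by (simp add: add.assoc[symmetric])
    ultimately show "h \<in> (\<lambda>(a,b). a + b) ` (F \<times> Fk)" using a(1) by force
  qed
  then have fin: "finite {h. \<exists>x. convolution \<phi> Xd f k (h,x) \<noteq> 0}"
    using finF by (meson finite_SigmaI finite_imageI finite_subset)
  have "compact {x. convolution \<phi> Xd f k (h,x) \<noteq> 0}" for h
  proof (rule lc_compact_sub[OF lcs])
    show "{x. convolution \<phi> Xd f k (h,x) \<noteq> 0} \<subseteq> (\<Union>a\<in>F. {x. f (a,x) \<noteq> 0})" using nz by blast
    show "compact (\<Union>a\<in>F. {x. f (a,x) \<noteq> 0})"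
      using finF(1) f unfolding good_def by (blast intro: compact_UN)
  qed
  then show ?thesis unfolding good_def using van lcs fin by blast
qed

lemma conv_van_right:
  fixes a f :: "'g \<times> 'x \<Rightarrow> 'k::field"
  assumes a: "good Xd UNIV a" and f: "good Xd V f" and inv: "invariant_set \<phi> Xd V" and x: "x \<notin> V"
  shows "convolution \<phi> Xd a f (h,x) = 0"
proof -
  have fu: "good Xd UNIV f" using f by (rule good_mono)
  have "f (- c + h, \<phi> (- c) x) = 0" if "a (c,x) \<noteq> 0" for c
  proof (rule ccontr)
    assume "f (- c + h, \<phi> (- c) x) \<noteq> 0"
    then have "\<phi> (- c) x \<in> V" using f unfolding good_def by blast
    moreover have xc: "x \<in> Xd c" using a that unfolding good_def by blast
    moreover have "\<phi> (- c) x \<in> Xd (- c)" using PA1[OF PA xc] .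
    ultimately have "\<phi> (- (- c)) (\<phi> (- c) x) \<in> V"
      using inv unfolding invariant_set_def by blast
    then have "x \<in> V" using PA2[OF PA xc] by simp
    then show False using x by simp
  qed
  then show ?thesis unfolding conv_formula_good[OF a fu] by (intro sum.neutral) auto
qed

lemma conv_van_left:
  fixes a f :: "'g \<times> 'x \<Rightarrow> 'k::field"
  assumes a: "good Xd UNIV a" and f: "good Xd V f" and x: "x \<notin> V"
  shows "convolution \<phi> Xd f a (h,x) = 0"
proof -
  have fu: "good Xd UNIV f" using f by (rule good_mono)
  have "f (c,x) = 0" for c using f x unfolding good_def by blast
  then show ?thesis unfolding conv_formula_good[OF fu a] by simp
qed

end



definition ind :: "'g \<Rightarrow> 'x set \<Rightarrow> 'g \<times> 'x \<Rightarrow> 'k::field" where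
  "ind g C = (\<lambda>\<gamma>. if fst \<gamma> = g \<and> snd \<gamma> \<in> C then 1 else 0)"

lemma ind_apply: "ind g C (h,x) = (if h = g \<and> x \<in> C then 1 else 0)"
  unfolding ind_def by simp

lemma lc_indicator:
  assumes "open C" "closed C"
  shows "lc (\<lambda>x. if x \<in> C then a else b)"
  unfolding lc_def
proof
  fix x
  show "\<exists>W. open W \<and> x \<in> W \<and> (\<forall>y\<in>W. (if y \<in> C then a else b) = (if x \<in> C then a else b))"
  proof (cases "x \<in> C")
    case True then show ?thesis using assms(1) by (intro exI[of _ C]) simp
  next
    case False then show ?thesis using assms(2) by (intro exI[of _ "- C"]) (simp add: open_Compl)
  qed
qed

lemma good_ind:
  fixes C :: "'x::t2_space set"
  assumes "compact C" "open C" "C \<subseteq> V \<inter> Xd g"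
  shows "good Xd V (ind g C :: 'g \<times> 'x \<Rightarrow> 'k::field)"
proof -
  have cl: "closed C" using assms(1) by (rule compact_imp_closed)
  have van: "\<forall>h x. x \<notin> V \<inter> Xd h \<longrightarrow> (ind g C (h,x) :: 'k) = 0"
    using assms(3) unfolding ind_def by auto
  have lcs: "lc (\<lambda>x. ind g C (h,x) :: 'k)" for h
  proof (cases "h = g")
    case True
    then have "(\<lambda>x. ind g C (h,x) :: 'k) = (\<lambda>x. if x \<in> C then 1 else 0)" unfolding ind_def by simp
    then show ?thesis using lc_indicator[OF assms(2) cl] by simp
  next
    case False
    then have "(\<lambda>x. ind g C (h,x) :: 'k) = (\<lambda>x. 0)" unfolding ind_def by simp
    then show ?thesis by (simp add: lc_const)
  qed
  have "{h. \<exists>x. (ind g C (h,x) :: 'k) \<noteq> 0} \<subseteq> {g}" unfolding ind_def by auto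
  then have fin: "finite {h. \<exists>x. (ind g C (h,x) :: 'k) \<noteq> 0}" by (rule finite_subset) simp
  have "compact {x. (ind g C (h,x) :: 'k) \<noteq> 0}" for h
  proof (cases "h = g")
    case True
    then have "{x. (ind g C (h,x) :: 'k) \<noteq> 0} = C" unfolding ind_def by auto
    then show ?thesis using assms(1) by simp
  next
    case False
    then have "{x. (ind g C (h,x) :: 'k) \<noteq> 0} = {}" unfolding ind_def by auto
    then show ?thesis by simp
  qed
  then show ?thesis unfolding good_def using van lcs fin by blast
qed

lemma good_vanish: "good Xd V f \<Longrightarrow> x \<notin> V \<Longrightarrow> f (g,x) = 0"
  unfolding good_def by blast

context
  fixes \<phi> :: "'g::group_add \<Rightarrow> 'x::t2_space \<Rightarrow> 'x" and Xd :: "'g \<Rightarrow> 'x set"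
  assumes PA: "partial_action \<phi> Xd"
    and lcs: "locally_compact_space (euclidean :: 'x topology)"
    and td: "totally_disconnected_space TYPE('x)"
begin

lemma SG: "open V \<Longrightarrow> (f \<in> steinberg Xd V) = good Xd V (f :: 'g \<times> 'x \<Rightarrow> 'k::field)"
  by (rule steinberg_good[OF PA_open[OF PA]])

lemma SGU: "(f \<in> steinberg Xd UNIV) = good Xd UNIV (f :: 'g \<times> 'x \<Rightarrow> 'k::field)"
  by (rule SG) simp

lemma M1:
  assumes VO: "open V" and inv: "invariant_set \<phi> Xd V"
  shows "graded_ideal \<phi> Xd (steinberg Xd V :: ('g \<times> 'x \<Rightarrow> 'k::field) set)"
proof -
  let ?I = "steinberg Xd V :: ('g \<times> 'x \<Rightarrow> 'k::field) set"
  have SGV: "\<And>f. (f \<in> ?I) = good Xd V f" using SG[OF VO] .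
  have sub: "?I \<subseteq> steinberg Xd UNIV"
  proof
    fix f assume "f \<in> ?I"
    then have "good Xd V f" by (simp only: SGV)
    then have "good Xd UNIV f" by (rule good_mono)
    then show "f \<in> steinberg Xd UNIV" by (simp only: SGU)
  qed
  have z: "(\<lambda>_. 0) \<in> ?I" by (simp only: SGV good_zero)
  have ad: "\<forall>f\<in>?I. \<forall>h\<in>?I. (\<lambda>\<gamma>. f \<gamma> + h \<gamma>) \<in> ?I"
  proof (intro ballI)
    fix f h assume "f \<in> ?I" "h \<in> ?I"
    then have "good Xd V f" "good Xd V h" by (simp_all only: SGV)
    then have "good Xd V (\<lambda>\<gamma>. f \<gamma> + h \<gamma>)" by (rule good_add)
    then show "(\<lambda>\<gamma>. f \<gamma> + h \<gamma>) \<in> ?I" by (simp only: SGV)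
  qed
  have ng: "\<forall>f\<in>?I. (\<lambda>\<gamma>. - f \<gamma>) \<in> ?I"
  proof
    fix f assume "f \<in> ?I"
    then have "good Xd V f" by (simp only: SGV)
    then have "good Xd V (\<lambda>\<gamma>. - f \<gamma>)" by (rule good_neg)
    then show "(\<lambda>\<gamma>. - f \<gamma>) \<in> ?I" by (simp only: SGV)
  qed
  have hm: "\<forall>f\<in>?I. \<forall>g. hom_component g f \<in> ?I"
  proof (intro ballI allI)
    fix f g assume "f \<in> ?I"
    then have "good Xd V f" by (simp only: SGV)
    then have "good Xd V (hom_component g f)" by (rule good_hom)
    then show "hom_component g f \<in> ?I" by (simp only: SGV)
  qed
  have cv: "\<forall>f\<in>?I. \<forall>a\<in>steinberg Xd UNIV. convolution \<phi> Xd a f \<in> ?I \<and> convolution \<phi> Xd f a \<in> ?I"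
  proof (intro ballI)
    fix f a :: "'g \<times> 'x \<Rightarrow> 'k" assume f: "f \<in> ?I" and a: "a \<in> steinberg Xd UNIV"
    have gf: "good Xd V f" using f by (simp only: SGV)
    have gfu: "good Xd UNIV f" using gf by (rule good_mono)
    have ga: "good Xd UNIV a" using a by (simp only: SGU)
    have "good Xd V (convolution \<phi> Xd a f)"
      by (rule good_restrict[OF good_conv[OF PA ga gfu]]) (rule conv_van_right[OF PA ga gf inv])
    moreover have "good Xd V (convolution \<phi> Xd f a)"
      by (rule good_restrict[OF good_conv[OF PA gfu ga]]) (rule conv_van_left[OF PA ga gf])
    ultimately show "convolution \<phi> Xd a f \<in> ?I \<and> convolution \<phi> Xd f a \<in> ?I"
      by (simp only: SGV)
  qed
  show ?thesis unfolding graded_ideal_def steinberg_ideal_def using sub z ad ng hm cv by (intro conjI)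
qed

lemma M2:
  assumes V1: "open V1" and V2: "open V2"
    and eq: "(steinberg Xd V1 :: ('g \<times> 'x \<Rightarrow> 'k::field) set) = steinberg Xd V2"
  shows "V1 \<subseteq> V2"
proof
  fix x assume x: "x \<in> V1"
  obtain C where C: "compact C" "open C" "x \<in> C" "C \<subseteq> V1" using zero_dim[OF lcs td V1 x] by blast
  have "C \<subseteq> V1 \<inter> Xd 0" using C PA_X0[OF PA] by simp
  then have "good Xd V1 (ind 0 C :: 'g \<times> 'x \<Rightarrow> 'k)" using C(1,2) by (intro good_ind)
  then have "(ind 0 C :: 'g \<times> 'x \<Rightarrow> 'k) \<in> steinberg Xd V1" by (simp only: SG[OF V1])
  then have "(ind 0 C :: 'g \<times> 'x \<Rightarrow> 'k) \<in> steinberg Xd V2" by (simp only: eq)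
  then have g2: "good Xd V2 (ind 0 C :: 'g \<times> 'x \<Rightarrow> 'k)" by (simp only: SG[OF V2])
  show "x \<in> V2"
  proof (rule ccontr)
    assume nx: "x \<notin> V2"
    have "(ind 0 C :: 'g \<times> 'x \<Rightarrow> 'k) (0,x) = 0" by (rule good_vanish[OF g2 nx])
    moreover have "(ind 0 C :: 'g \<times> 'x \<Rightarrow> 'k) (0,x) = 1" using C(3) by (simp add: ind_def)
    ultimately show False by simp
  qed
qed

end



lemma good_X: "good Xd V f \<Longrightarrow> f (g,x) \<noteq> 0 \<Longrightarrow> x \<in> Xd g"
  unfolding good_def by blast

lemma neg_add_eq0: "- g + h = (0::'g::group_add) \<Longrightarrow> h = g"
proof -
  assume a: "- g + h = 0"
  have "h = g + (- g + h)" by (simp add: add.assoc[symmetric])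
  then show "h = g" using a by simp
qed

context
  fixes \<phi> :: "'g::group_add \<Rightarrow> 'x::t2_space \<Rightarrow> 'x" and Xd :: "'g \<Rightarrow> 'x set"
  assumes PA: "partial_action \<phi> Xd"
    and lcs: "locally_compact_space (euclidean :: 'x topology)"
    and td: "totally_disconnected_space TYPE('x)"
begin

lemma M3:
  assumes GI: "graded_ideal \<phi> Xd (I :: ('g \<times> 'x \<Rightarrow> 'k::field) set)"
  shows "\<exists>V. open V \<and> invariant_set \<phi> Xd V \<and> steinberg Xd V = I"
proof -
  have Isub: "I \<subseteq> steinberg Xd UNIV" using GI unfolding graded_ideal_def steinberg_ideal_def by blast
  have I0: "(\<lambda>_. 0) \<in> I" using GI unfolding graded_ideal_def steinberg_ideal_def by blast
  have Iadd: "\<And>f h. f \<in> I \<Longrightarrow> h \<in> I \<Longrightarrow> (\<lambda>\<gamma>. f \<gamma> + h \<gamma>) \<in> I"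
    using GI unfolding graded_ideal_def steinberg_ideal_def by blast
  have Ineg: "\<And>f. f \<in> I \<Longrightarrow> (\<lambda>\<gamma>. - f \<gamma>) \<in> I"
    using GI unfolding graded_ideal_def steinberg_ideal_def by blast
  have Ihom: "\<And>f g. f \<in> I \<Longrightarrow> hom_component g f \<in> I"
    using GI unfolding graded_ideal_def by blast
  have IA: "good Xd UNIV f" if "f \<in> I" for f
  proof -
    have "f \<in> steinberg Xd UNIV" using that Isub by blast
    then show ?thesis by (simp only: SGU[OF PA lcs td])
  qed
  have IconvL: "convolution \<phi> Xd a f \<in> I" if "f \<in> I" "good Xd UNIV a" for f a
  proof -
    have "a \<in> steinberg Xd UNIV" using that(2) by (simp only: SGU[OF PA lcs td])
    then show ?thesis using that(1) GI unfolding graded_ideal_def steinberg_ideal_def by blast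
  qed
  have IconvR: "convolution \<phi> Xd f a \<in> I" if "f \<in> I" "good Xd UNIV a" for f a
  proof -
    have "a \<in> steinberg Xd UNIV" using that(2) by (simp only: SGU[OF PA lcs td])
    then show ?thesis using that(1) GI unfolding graded_ideal_def steinberg_ideal_def by blast
  qed
  define V where "V = {x. \<exists>f\<in>I. f (0,x) \<noteq> 0}"
  have K1: "x \<in> V" if f: "f \<in> I" and nz: "f (g,x) \<noteq> 0" for f g x
  proof -
    have fgI: "hom_component g f \<in> I" using Ihom f by blast
    have gfg: "good Xd UNIV (hom_component g f)" using IA fgI by blast
    have xg: "x \<in> Xd g" using good_X[OF IA[OF f] nz] .
    have y: "\<phi> (- g) x \<in> Xd (- g)" using PA1[OF PA xg] .
    obtain C where C: "compact C" "open C" "\<phi> (- g) x \<in> C" "C \<subseteq> Xd (- g)"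
      using zero_dim[OF lcs td PA_open[OF PA] y] by blast
    have gb: "good Xd UNIV (ind (- g) C :: 'g \<times> 'x \<Rightarrow> 'k)" using C by (intro good_ind) auto
    have cI: "convolution \<phi> Xd (hom_component g f) (ind (- g) C) \<in> I" using IconvR[OF fgI gb] .
    have "convolution \<phi> Xd (hom_component g f) (ind (- g) C) (0,x)
          = (\<Sum>a\<in>{g}. hom_component g f (a,x) * ind (- g) C (- a + 0, \<phi> (- a) x))"
    proof (rule conv_formula)
      show "\<And>a x. hom_component g f (a, x) \<noteq> 0 \<Longrightarrow> a \<in> {g}" unfolding hom_component_def by (auto split: if_splits)
      show "\<And>a x. hom_component g f (a, x) \<noteq> 0 \<Longrightarrow> x \<in> Xd a" using good_X[OF gfg] by blast
      show "\<And>b y. (ind (- g) C (b, y) :: 'k) \<noteq> 0 \<Longrightarrow> y \<in> Xd b" using good_X[OF gb] by blast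
    qed simp
    also have "\<dots> = f (g,x)" using C(3) by (simp add: hom_component_def ind_def)
    finally have "convolution \<phi> Xd (hom_component g f) (ind (- g) C) (0,x) \<noteq> 0" using nz by simp
    then show ?thesis using cI unfolding V_def by blast
  qed
  have VO: "open V"
  proof -
    have "V = (\<Union>f\<in>I. {x. f (0,x) \<noteq> 0})" unfolding V_def by blast
    moreover have "open {x. f (0,x) \<noteq> 0}" if "f \<in> I" for f
    proof -
      have "lc (\<lambda>x. f (0,x))" using IA[OF that] unfolding good_def by blast
      then show ?thesis by (rule lc_open_neq)
    qed
    ultimately show ?thesis by (simp add: open_UN)
  qed
  have Vinv: "invariant_set \<phi> Xd V"
    unfolding invariant_set_def
  proof (intro allI subsetI)
    fix g z assume "z \<in> \<phi> (- g) ` (Xd g \<inter> V)"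
    then obtain x where x: "x \<in> Xd g" "x \<in> V" "z = \<phi> (- g) x" by blast
    then obtain f where f: "f \<in> I" "f (0,x) \<noteq> 0" unfolding V_def by blast
    have y: "\<phi> (- g) x \<in> Xd (- g)" using PA1[OF PA x(1)] .
    obtain C where C: "compact C" "open C" "\<phi> (- g) x \<in> C" "C \<subseteq> Xd (- g)"
      using zero_dim[OF lcs td PA_open[OF PA] y] by blast
    have gb: "good Xd UNIV (ind (- g) C :: 'g \<times> 'x \<Rightarrow> 'k)" using C by (intro good_ind) auto
    have cI: "convolution \<phi> Xd (ind (- g) C) f \<in> I" using IconvL[OF f(1) gb] .
    have "convolution \<phi> Xd (ind (- g) C) f (- g, \<phi> (- g) x)
          = (\<Sum>a\<in>{- g}. ind (- g) C (a, \<phi> (- g) x) * f (- a + - g, \<phi> (- a) (\<phi> (- g) x)))"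
    proof (rule conv_formula)
      show "\<And>a x. (ind (- g) C (a, x) :: 'k) \<noteq> 0 \<Longrightarrow> a \<in> {- g}" unfolding ind_def by (auto split: if_splits)
      show "\<And>a x. (ind (- g) C (a, x) :: 'k) \<noteq> 0 \<Longrightarrow> x \<in> Xd a" using good_X[OF gb] by blast
      show "\<And>b y. f (b, y) \<noteq> 0 \<Longrightarrow> y \<in> Xd b" using good_X[OF IA[OF f(1)]] by blast
    qed simp
    also have "\<dots> = f (0,x)" using C(3) PA2[OF PA x(1)] by (simp add: ind_def)
    finally have "convolution \<phi> Xd (ind (- g) C) f (- g, \<phi> (- g) x) \<noteq> 0" using f(2) by simp
    then have "\<phi> (- g) x \<in> V" using K1[OF cI] by blast
    then show "z \<in> Xd (- g) \<inter> V" using x(3) y by simp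
  qed
  have sub1: "I \<subseteq> steinberg Xd V"
  proof
    fix f assume f: "f \<in> I"
    have "good Xd V f"
    proof (rule good_restrict[OF IA[OF f]])
      fix g x assume "x \<notin> V" then show "f (g,x) = 0" using K1[OF f] by blast
    qed
    then show "f \<in> steinberg Xd V" by (simp only: SG[OF PA lcs td VO])
  qed
  have E1: "(ind 0 {z. f (0,z) \<noteq> 0} :: 'g \<times> 'x \<Rightarrow> 'k) \<in> I" if f: "f \<in> I" for f
  proof -
    define c :: "'g \<times> 'x \<Rightarrow> 'k" where "c = (\<lambda>\<gamma>. if fst \<gamma> = 0 then inverse (f (0, snd \<gamma>)) else (0::'k))"
    have gf: "good Xd UNIV f" using IA[OF f] .
    have gc: "good Xd UNIV c" unfolding good_def
    proof (intro conjI allI impI)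
      fix h x assume "x \<notin> UNIV \<inter> Xd h"
      then show "c (h,x) = 0" using PA_X0[OF PA] unfolding c_def by (auto split: if_splits)
    next
      fix h
      show "lc (\<lambda>x. c (h,x))"
      proof (cases "h = 0")
        case True
        have "lc (\<lambda>x. f (0,x))" using gf unfolding good_def by blast
        then have "lc (\<lambda>x. inverse (f (0,x)))" by (rule lc_comp)
        then show ?thesis using True unfolding c_def by simp
      next
        case False then show ?thesis unfolding c_def by (simp add: lc_const)
      qed
    next
      have "{g. \<exists>x. c (g,x) \<noteq> 0} \<subseteq> {0}" unfolding c_def by (auto split: if_splits)
      then show "finite {g. \<exists>x. c (g,x) \<noteq> 0}" by (rule finite_subset) simp
    next
      fix h
      show "compact {x. c (h,x) \<noteq> 0}"
      proof (cases "h = 0")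
        case True
        then have "{x. c (h,x) \<noteq> 0} = {x. f (0,x) \<noteq> 0}" unfolding c_def by simp
        then show ?thesis using gf unfolding good_def by simp
      next
        case False
        then have "{x. c (h,x) \<noteq> 0} = {}" unfolding c_def by simp
        then show ?thesis by simp
      qed
    qed
    have eI: "hom_component 0 (convolution \<phi> Xd c f) \<in> I" using Ihom[OF IconvL[OF f gc]] .
    have cf: "convolution \<phi> Xd c f (h,z) = c (0,z) * f (- 0 + h, \<phi> (- 0) z)" for h z
    proof -
      have "convolution \<phi> Xd c f (h,z) = (\<Sum>a\<in>{0}. c (a,z) * f (- a + h, \<phi> (- a) z))"
      proof (rule conv_formula)
        show "\<And>a x. c (a, x) \<noteq> 0 \<Longrightarrow> a \<in> {0}" unfolding c_def by (auto split: if_splits)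
        show "\<And>a x. c (a, x) \<noteq> 0 \<Longrightarrow> x \<in> Xd a" using good_X[OF gc] by blast
        show "\<And>b y. f (b, y) \<noteq> 0 \<Longrightarrow> y \<in> Xd b" using good_X[OF gf] by blast
      qed simp
      then show ?thesis by simp
    qed
    have cf': "convolution \<phi> Xd c f (h,z) = inverse (f (0,z)) * f (h,z)" for h z
      using cf[of h z] PA_phi0[OF PA, of z] by (simp add: c_def)
    have "hom_component 0 (convolution \<phi> Xd c f) = ind 0 {z. f (0,z) \<noteq> 0}"
    proof
      fix \<gamma> :: "'g \<times> 'x"
      obtain h z where hz: "\<gamma> = (h,z)" by (cases \<gamma>)
      show "hom_component 0 (convolution \<phi> Xd c f) \<gamma> = ind 0 {z. f (0,z) \<noteq> 0} \<gamma>"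
        unfolding hz hom_component_def ind_def by (simp add: cf')
    qed
    then show ?thesis using eI by simp
  qed
  have E2: "finite T \<Longrightarrow> (\<forall>S\<in>T. (ind 0 S :: 'g \<times> 'x \<Rightarrow> 'k) \<in> I) \<Longrightarrow> (ind 0 (\<Union>T) :: 'g \<times> 'x \<Rightarrow> 'k) \<in> I" for T
  proof (induction T rule: finite_induct)
    case empty
    have "(ind 0 (\<Union>{}) :: 'g \<times> 'x \<Rightarrow> 'k) = (\<lambda>_. 0)" unfolding ind_def by simp
    then show ?case using I0 by simp
  next
    case (insert S T)
    have i1: "(ind 0 S :: 'g \<times> 'x \<Rightarrow> 'k) \<in> I" using insert.prems by simp
    have i2: "(ind 0 (\<Union>T) :: 'g \<times> 'x \<Rightarrow> 'k) \<in> I" using insert.IH insert.prems by simp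
    have g1: "good Xd UNIV (ind 0 S :: 'g \<times> 'x \<Rightarrow> 'k)" using IA[OF i1] .
    have g2: "good Xd UNIV (ind 0 (\<Union>T) :: 'g \<times> 'x \<Rightarrow> 'k)" using IA[OF i2] .
    let ?p = "convolution \<phi> Xd (ind 0 S) (ind 0 (\<Union>T)) :: 'g \<times> 'x \<Rightarrow> 'k"
    have pI: "?p \<in> I" using IconvR[OF i1 g2] .
    have pv: "?p (h,z) = (if h = 0 \<and> z \<in> S \<and> z \<in> \<Union>T then 1 else 0)" for h z
    proof -
      have "?p (h,z) = (\<Sum>a\<in>{0}. ind 0 S (a,z) * ind 0 (\<Union>T) (- a + h, \<phi> (- a) z))"
      proof (rule conv_formula)
        show "\<And>a x. (ind 0 S (a, x) :: 'k) \<noteq> 0 \<Longrightarrow> a \<in> {0}" unfolding ind_def by (auto split: if_splits)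
        show "\<And>a x. (ind 0 S (a, x) :: 'k) \<noteq> 0 \<Longrightarrow> x \<in> Xd a" using good_X[OF g1] by blast
        show "\<And>b y. (ind 0 (\<Union>T) (b, y) :: 'k) \<noteq> 0 \<Longrightarrow> y \<in> Xd b" using good_X[OF g2] by blast
      qed simp
      then show ?thesis using PA_phi0[OF PA, of z] by (simp add: ind_def)
    qed
    have rI: "(\<lambda>\<gamma>. (ind 0 S \<gamma> + ind 0 (\<Union>T) \<gamma>) + - ?p \<gamma>) \<in> I"
      using Iadd[OF Iadd[OF i1 i2] Ineg[OF pI]] by simp
    have "(\<lambda>\<gamma>. (ind 0 S \<gamma> + ind 0 (\<Union>T) \<gamma>) + - ?p \<gamma>) = (ind 0 (\<Union>(insert S T)) :: 'g \<times> 'x \<Rightarrow> 'k)"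
    proof
      fix \<gamma> :: "'g \<times> 'x"
      obtain h z where hz: "\<gamma> = (h,z)" by (cases \<gamma>)
      show "(ind 0 S \<gamma> + ind 0 (\<Union>T) \<gamma>) + - ?p \<gamma> = ind 0 (\<Union>(insert S T)) \<gamma>"
        unfolding hz pv by (cases "z \<in> S"; cases "z \<in> \<Union>T"; cases "h = 0") (simp_all add: ind_def)
    qed
    then show ?case using rI by simp
  qed
  have K2: "\<exists>e\<in>I. (\<forall>h z. h \<noteq> 0 \<longrightarrow> e (h,z) = 0) \<and> (\<forall>z\<in>C. e (0,z) = 1)"
    if C: "compact C" "C \<subseteq> V" for C
  proof -
    let ?T = "(\<lambda>f. {z. f (0,z) \<noteq> 0}) ` I"
    have "C \<subseteq> \<Union>?T" using C(2) unfolding V_def by blast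
    moreover have "open B" if BT: "B \<in> ?T" for B
    proof -
      obtain f where f: "f \<in> I" "B = {z. f (0,z) \<noteq> 0}" using BT by blast
      have "lc (\<lambda>x. f (0,x))" using IA[OF f(1)] unfolding good_def by blast
      then show ?thesis unfolding f(2) by (rule lc_open_neq)
    qed
    ultimately obtain T' where T': "T' \<subseteq> ?T" "finite T'" "C \<subseteq> \<Union>T'"
      using compactE[OF C(1)] by metis
    have "\<forall>S\<in>T'. (ind 0 S :: 'g \<times> 'x \<Rightarrow> 'k) \<in> I" using T'(1) E1 by blast
    then have eI: "(ind 0 (\<Union>T') :: 'g \<times> 'x \<Rightarrow> 'k) \<in> I" using E2 T'(2) by blast
    have "(\<forall>h z. h \<noteq> 0 \<longrightarrow> (ind 0 (\<Union>T') :: 'g \<times> 'x \<Rightarrow> 'k) (h,z) = 0) \<and> (\<forall>z\<in>C. (ind 0 (\<Union>T') :: 'g \<times> 'x \<Rightarrow> 'k) (0,z) = 1)"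
      using T'(3) unfolding ind_def by (auto split: if_splits)
    then show ?thesis using eI by blast
  qed
  have E3: "finite F \<Longrightarrow> (\<forall>g\<in>F. u g \<in> I) \<Longrightarrow> (\<lambda>\<gamma>. \<Sum>g\<in>F. u g \<gamma>) \<in> I" for F and u :: "'g \<Rightarrow> 'g \<times> 'x \<Rightarrow> 'k"
  proof (induction F rule: finite_induct)
    case empty then show ?case using I0 by simp
  next
    case (insert b B)
    have "u b \<in> I" using insert.prems by simp
    moreover have "(\<lambda>\<gamma>. \<Sum>g\<in>B. u g \<gamma>) \<in> I" using insert.IH insert.prems by simp
    ultimately have "(\<lambda>\<gamma>. u b \<gamma> + (\<Sum>g\<in>B. u g \<gamma>)) \<in> I" by (rule Iadd)
    then show ?case using insert.hyps by simp
  qed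
  have sub2: "steinberg Xd V \<subseteq> I"
  proof
    fix f :: "'g \<times> 'x \<Rightarrow> 'k" assume "f \<in> steinberg Xd V"
    then have gf: "good Xd V f" by (simp only: SG[OF PA lcs td VO])
    have homI: "hom_component g f \<in> I" for g
    proof -
      define K where "K = {x. f (g,x) \<noteq> 0}"
      have cK: "compact K" using gf unfolding good_def K_def by blast
      have KV: "K \<subseteq> V \<inter> Xd g" using gf unfolding good_def K_def by blast
      have cC: "compact (\<phi> (- g) ` K)"
        using compact_continuous_image[OF continuous_on_subset[OF PA4[OF PA] ] cK] KV by blast
      have CV: "\<phi> (- g) ` K \<subseteq> V"
        using Vinv KV unfolding invariant_set_def by blast
      obtain e where e: "e \<in> I" "\<forall>h z. h \<noteq> 0 \<longrightarrow> e (h,z) = 0" "\<forall>z\<in>\<phi> (- g) ` K. e (0,z) = 1"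
        using K2[OF cC CV] by blast
      have gh: "good Xd UNIV (hom_component g f)" using good_mono[OF good_hom[OF gf]] .
      have ge: "good Xd UNIV e" using IA[OF e(1)] .
      have cI: "convolution \<phi> Xd (hom_component g f) e \<in> I" using IconvL[OF e(1) gh] .
      have "convolution \<phi> Xd (hom_component g f) e = hom_component g f"
      proof
        fix \<gamma> :: "'g \<times> 'x"
        obtain h x where hx: "\<gamma> = (h,x)" by (cases \<gamma>)
        have "convolution \<phi> Xd (hom_component g f) e (h,x) = (\<Sum>a\<in>{g}. hom_component g f (a,x) * e (- a + h, \<phi> (- a) x))"
        proof (rule conv_formula)
          show "\<And>a x. hom_component g f (a, x) \<noteq> 0 \<Longrightarrow> a \<in> {g}" unfolding hom_component_def by (auto split: if_splits)
          show "\<And>a x. hom_component g f (a, x) \<noteq> 0 \<Longrightarrow> x \<in> Xd a" using good_X[OF gh] by blast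
          show "\<And>b y. e (b, y) \<noteq> 0 \<Longrightarrow> y \<in> Xd b" using good_X[OF ge] by blast
        qed simp
        also have "\<dots> = hom_component g f (h,x)"
        proof (cases "h = g")
          case True
          show ?thesis
          proof (cases "f (g,x) = 0")
            case True then show ?thesis using \<open>h = g\<close> by (simp add: hom_component_def)
          next
            case False
            then have "x \<in> K" unfolding K_def by simp
            then have "e (0, \<phi> (- g) x) = 1" using e(3) by blast
            then show ?thesis using \<open>h = g\<close> by (simp add: hom_component_def)
          qed
        next
          case False
          then have "- g + h \<noteq> 0" using neg_add_eq0 by blast
          then have "e (- g + h, \<phi> (- g) x) = 0" using e(2) by blast
          then show ?thesis using False by (simp add: hom_component_def)
        qed
        finally show "convolution \<phi> Xd (hom_component g f) e \<gamma> = hom_component g f \<gamma>" using hx by simp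
      qed
      then show ?thesis using cI by simp
    qed
    define Fd where "Fd = {g. \<exists>x. f (g,x) \<noteq> 0}"
    have finF: "finite Fd" using gf unfolding good_def Fd_def by blast
    have "(\<lambda>\<gamma>. \<Sum>g\<in>Fd. hom_component g f \<gamma>) \<in> I" using E3[OF finF, of "\<lambda>g. hom_component g f"] homI by blast
    moreover have "(\<lambda>\<gamma>. \<Sum>g\<in>Fd. hom_component g f \<gamma>) = f"
    proof
      fix \<gamma> :: "'g \<times> 'x"
      obtain h x where hx: "\<gamma> = (h,x)" by (cases \<gamma>)
      have "(\<Sum>g\<in>Fd. hom_component g f (h,x)) = (\<Sum>g\<in>Fd. if h = g then f (h,x) else 0)"
        unfolding hom_component_def by simp
      also have "\<dots> = (if h \<in> Fd then f (h,x) else 0)" using finF by simp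
      also have "\<dots> = f (h,x)" unfolding Fd_def by auto
      finally show "(\<Sum>g\<in>Fd. hom_component g f \<gamma>) = f \<gamma>" using hx by simp
    qed
    ultimately show "f \<in> I" by simp
  qed
  show ?thesis using VO Vinv sub1 sub2 by blast
qed

end

theorem mainTheorem11:
  fixes \<phi> :: "'g::group_add \<Rightarrow> 'x::t2_space \<Rightarrow> 'x"
    and Xd :: "'g \<Rightarrow> 'x set"
  assumes "locally_compact_space (euclidean :: 'x topology)"
    and "totally_disconnected_space TYPE('x)"
    and "partial_action \<phi> Xd"
    and "\<forall>g. closed (Xd g)"
  shows "bij_betw (\<lambda>V. steinberg Xd V :: ('g \<times> 'x \<Rightarrow> 'k::field) set)
           {V. open V \<and> invariant_set \<phi> Xd V}
           {I. graded_ideal \<phi> Xd I}"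
  unfolding bij_betw_def
proof (intro conjI)
  show "inj_on (\<lambda>V. steinberg Xd V :: ('g \<times> 'x \<Rightarrow> 'k::field) set) {V. open V \<and> invariant_set \<phi> Xd V}"
  proof (rule inj_onI)
    fix V1 V2 assume V1: "V1 \<in> {V. open V \<and> invariant_set \<phi> Xd V}" and V2: "V2 \<in> {V. open V \<and> invariant_set \<phi> Xd V}"
      and eq: "(steinberg Xd V1 :: ('g \<times> 'x \<Rightarrow> 'k::field) set) = steinberg Xd V2"
    have "V1 \<subseteq> V2" using M2[OF assms(3) assms(1) assms(2), of V1 V2] V1 V2 eq by blast
    moreover have "V2 \<subseteq> V1" using M2[OF assms(3) assms(1) assms(2), of V2 V1] V1 V2 eq by blast
    ultimately show "V1 = V2" by blast
  qed
next
  show "(\<lambda>V. steinberg Xd V :: ('g \<times> 'x \<Rightarrow> 'k::field) set) ` {V. open V \<and> invariant_set \<phi> Xd V} = {I. graded_ideal \<phi> Xd I}"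
  proof
    show "(\<lambda>V. steinberg Xd V :: ('g \<times> 'x \<Rightarrow> 'k::field) set) ` {V. open V \<and> invariant_set \<phi> Xd V} \<subseteq> {I. graded_ideal \<phi> Xd I}"
      using M1[OF assms(3) assms(1) assms(2)] by blast
    show "{I. graded_ideal \<phi> Xd I} \<subseteq> (\<lambda>V. steinberg Xd V :: ('g \<times> 'x \<Rightarrow> 'k::field) set) ` {V. open V \<and> invariant_set \<phi> Xd V}"
    proof
      fix I :: "('g \<times> 'x \<Rightarrow> 'k) set" assume "I \<in> {I. graded_ideal \<phi> Xd I}"
      then obtain V where "open V" "invariant_set \<phi> Xd V" "steinberg Xd V = I"
        using M3[OF assms(3) assms(1) assms(2)] by blast
      then show "I \<in> (\<lambda>V. steinberg Xd V :: ('g \<times> 'x \<Rightarrow> 'k::field) set) ` {V. open V \<and> invariant_set \<phi> Xd V}"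
        by blast
    qed
  qed
qed


end
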